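(* Let $\alpha=a+b\sqrt{D}\in\mathbb{R}$ with $a,b\in\mathbb{Q}$, $b\neq 0$, and $D\ge 2$ a squarefree integer, and let $K=\mathbb{Q}(\alpha)$. Then \[\mathcal{A}_1(\alpha)=\left\{\pm 2b\sqrt{D}\,\mathrm{N}(s) : s\in\Lambda^*\setminus\{0\}\right\},\] where $\Lambda^*$ is the lattice in $K$ dual to $\Lambda=\mathbb{Z}+\alpha\mathbb{Z}$ with respect to the trace form.
   Context: For $\alpha\in\mathbb{R}$, $\mathcal{A}_1(\alpha)$ denotes the set of accumulation points in $\mathbb{R}$ of $\{|q|(q\alpha-p):q\in\mathbb{Z}\setminus\{0\},\ p\in\mathbb{Z}\}$. $\mathrm{N}$ and $\mathrm{Tr}$ are the norm and trace maps from $K$ to $\mathbb{Q}$. The trace form on $K$ is $\langle x,y\rangle=\mathrm{Tr}(xy)$. For the lattice $\Lambda=\mathbb{Z}+\alpha\mathbb{Z}$, its dual lattice with respect to the trace form is $\Lambda^*=\{x\in K:\mathrm{Tr}(xy)\in\mathbb{Z}\text{ for all }y\in\Lambda\}$, equivalently $\Lambda^*=\alpha_0^*\mathbb{Z}+\alpha_1^*\mathbb{Z}$ where $\{\alpha_0^*,\alpha_1^*\}\subset K$ is the basis with $\mathrm{Tr}(\alpha_i\alpha_j^* )=\delta_{ij}$ for $\alpha_0=1,\alpha_1=\alpha$. *)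

theory Defs
  imports "HOL-Analysis.Analysis" "HOL-Computational_Algebra.Squarefree"
begin

text \<open>Elements of the real quadratic field K = Q(sqrt D) are represented by their
  coordinates (x, y) :: rat \<times> rat, standing for the real number x + y sqrt D.\<close>

definition qf_emb :: "int \<Rightarrow> rat \<times> rat \<Rightarrow> real" where
  "qf_emb D u = of_rat (fst u) + of_rat (snd u) * sqrt (of_int D)"

definition qf_mult :: "int \<Rightarrow> rat \<times> rat \<Rightarrow> rat \<times> rat \<Rightarrow> rat \<times> rat" where
  "qf_mult D u v = (fst u * fst v + of_int D * snd u * snd v, fst u * snd v + snd u * fst v)"

definition qf_trace :: "rat \<times> rat \<Rightarrow> rat" where
  "qf_trace u = 2 * fst u"

definition qf_norm :: "int \<Rightarrow> rat \<times> rat \<Rightarrow> rat" where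
  "qf_norm D u = (fst u)\<^sup>2 - of_int D * (snd u)\<^sup>2"

text \<open>Dual lattice of Lambda = Z + alpha Z, alpha = a + b sqrt D, w.r.t. the trace form:
  all s in K with Tr(s * 1) and Tr(s * alpha) integers.\<close>
definition dual_lattice :: "int \<Rightarrow> rat \<Rightarrow> rat \<Rightarrow> (rat \<times> rat) set" where
  "dual_lattice D a b = {s. qf_trace s \<in> \<int> \<and> qf_trace (qf_mult D s (a, b)) \<in> \<int>}"

definition A1 :: "real \<Rightarrow> real set" where
  "A1 \<alpha> = {x. x islimpt {\<bar>real_of_int q\<bar> * (real_of_int q * \<alpha> - real_of_int p) | q p. q \<noteq> 0}}"

end

theory Submission
  imports Defs
begin

lemma sqrt_sqfree_irrat:
  fixes D :: int
  assumes "D \<ge> 2" "squarefree D"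
  shows "sqrt (real_of_int D) \<notin> \<rat>"
proof
  assume "sqrt (real_of_int D) \<in> \<rat>"
  then obtain m n :: nat where n: "n \<noteq> 0" and e: "\<bar>sqrt (real_of_int D)\<bar> = real m / real n"
    and cp: "coprime m n" by (rule Rats_abs_nat_div_natE)
  have "sqrt (real_of_int D) = real m / real n" using e assms(1) by simp
  then have "real_of_int D = (real m / real n)^2"
    using assms(1) by (metis of_int_0_le_iff order.trans zero_le_numeral real_sqrt_pow2)
  then have "real_of_int D * real n ^2 = real m ^ 2" using n by (simp add: field_simps)
  then have eq: "D * int n ^2 = int m ^ 2" by (metis of_int_eq_iff of_int_mult of_int_of_nat_eq of_int_power)
  then have "int n ^2 dvd int m ^2" by (metis dvd_triv_right)
  then have "int n dvd int m" by (simp add: pow_divides_pow_iff)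
  then have "n dvd m" by simp
  with cp have "n = 1" by (metis coprime_absorb_left coprime_commute  is_unit_gcd gcd_nat.absorb2 nat_dvd_1_iff_1) 
  then have "D = int m ^ 2" using eq by simp
  then have "int m dvd 1" using assms(2) by (metis dvd_refl squarefreeD)
  then have "D = 1" using \<open>D = int m ^ 2\<close> by simp
  then show False using assms by simp
qed


lemma rat_den: "\<exists>d::int. d > 0 \<and> of_int d * (x::rat) \<in> \<int>"
proof -
  obtain n d where q: "quotient_of x = (n, d)" by (cases "quotient_of x") blast
  then have "x = of_int n / of_int d" "d > 0" by (simp_all add: quotient_of_div quotient_of_denom_pos)
  then have "of_int d * x = of_int n" by simp
  then have "of_int d * x \<in> \<int>" by (simp only: Ints_of_int)
  then show ?thesis using \<open>d > 0\<close> by blast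
qed

lemma rat_den3: "\<exists>d::int. d > 0 \<and> of_int d * (x::rat) \<in> \<int> \<and> of_int d * (y::rat) \<in> \<int> \<and> of_int d * (z::rat) \<in> \<int>"
proof -
  obtain d1 :: int where d1: "d1 > 0" "of_int d1 * x \<in> \<int>" using rat_den by blast
  obtain d2 :: int where d2: "d2 > 0" "of_int d2 * y \<in> \<int>" using rat_den by blast
  obtain d3 :: int where d3: "d3 > 0" "of_int d3 * z \<in> \<int>" using rat_den by blast
  note d = d1 d2 d3
  have e1: "of_int (d1*d2*d3) * x = (of_int d1 * x) * of_int (d2 * d3)" by simp
  have e2: "of_int (d1*d2*d3) * y = (of_int d2 * y) * of_int (d1 * d3)" by simp
  have e3: "of_int (d1*d2*d3) * z = (of_int d3 * z) * of_int (d1 * d2)" by simp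
  have "of_int (d1*d2*d3) * x \<in> \<int>" unfolding e1 by (rule Ints_mult[OF d1(2) Ints_of_int])
  moreover have "of_int (d1*d2*d3) * y \<in> \<int>" unfolding e2 by (rule Ints_mult[OF d2(2) Ints_of_int])
  moreover have "of_int (d1*d2*d3) * z \<in> \<int>" unfolding e3 by (rule Ints_mult[OF d3(2) Ints_of_int])
  moreover have "(0::int) < d1*d2*d3" using d by simp
  ultimately show ?thesis by blast
qed

definition alp :: "rat \<Rightarrow> rat \<Rightarrow> int \<Rightarrow> real" where
  "alp a b D = of_rat a + of_rat b * sqrt (of_int D)"
definition alpc :: "rat \<Rightarrow> rat \<Rightarrow> int \<Rightarrow> real" where
  "alpc a b D = of_rat a - of_rat b * sqrt (of_int D)"
definition Vr :: "rat \<Rightarrow> rat \<Rightarrow> int \<Rightarrow> int \<Rightarrow> int \<Rightarrow> real" where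
  "Vr a b D p q = (of_int p - of_int q * alp a b D) * (of_int p - of_int q * alpc a b D)"
definition Tset :: "rat \<Rightarrow> rat \<Rightarrow> int \<Rightarrow> real set" where
  "Tset a b D = {\<sigma> * (- Vr a b D p q) / (2 * of_rat b * sqrt (of_int D)) | \<sigma> p q.
      \<sigma> \<in> {1,-1} \<and> (p,q) \<noteq> (0::int,0::int)}"
definition Sset :: "real \<Rightarrow> real set" where
  "Sset \<alpha> = {\<bar>real_of_int q\<bar> * (real_of_int q * \<alpha> - real_of_int p) | q p. q \<noteq> 0}"

context
  fixes a b :: rat and D :: int
  assumes b0: "b \<noteq> 0" and D2: "D \<ge> 2" and sqf: "squarefree D"
begin

lemma rpos: "sqrt (real_of_int D) > 0" using D2 by simp
lemma rsq: "(sqrt (real_of_int D))^2 = real_of_int D" using D2 by simp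
lemma rirr: "sqrt (real_of_int D) \<notin> \<rat>" using sqrt_sqfree_irrat D2 sqf by blast
lemma rb0: "(of_rat b :: real) \<noteq> 0" using b0 by simp

lemma lin_indep:
  fixes x y :: real
  assumes "x \<in> \<rat>" "y \<in> \<rat>" "x + y * sqrt (of_int D) = 0"
  shows "x = 0 \<and> y = 0"
proof (cases "y = 0")
  case True then show ?thesis using assms by simp
next
  case False
  have "y * sqrt (of_int D) = - x" using assms(3) by linarith
  then have "sqrt (of_int D) = - x / y" using False by (metis nonzero_mult_div_cancel_left)
  moreover have "- x / y \<in> \<rat>" using assms(1,2) by (intro Rats_divide) (simp_all add: Rats_minus_iff)
  ultimately have "sqrt (of_int D) \<in> \<rat>" by simp
  then show ?thesis using rirr by simp
qed

lemma xi_nz: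
  assumes "(p,q) \<noteq> (0::int,0::int)" and t: "t = sqrt (of_int D) \<or> t = - sqrt (of_int D)"
  shows "of_int p - of_int q * (of_rat a + of_rat b * t) \<noteq> (0::real)"
proof
  assume h: "of_int p - of_int q * (of_rat a + of_rat b * t) = (0::real)"
  define s :: real where "s = (if t = sqrt (of_int D) then 1 else -1)"
  have ts: "t = s * sqrt (of_int D)" using t unfolding s_def by (cases "t = sqrt (of_int D)") simp_all
  have eq: "(of_int p - of_int q * of_rat a) + (- of_int q * of_rat b * s) * sqrt (of_int D) = 0"
    using h unfolding ts by (simp add: algebra_simps)
  have sq: "s \<in> \<rat>" unfolding s_def by simp
  have r1: "of_int p - of_int q * of_rat a \<in> \<rat>" by simp
  have r2: "- of_int q * of_rat b * s \<in> \<rat>" using sq by simp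
  have hh: "of_int p - of_int q * of_rat a = (0::real) \<and> - of_int q * of_rat b * s = 0"
    by (rule lin_indep[OF r1 r2 eq])
  then have h1: "- of_int q * of_rat b * s = 0" and h2: "of_int p - of_int q * of_rat a = (0::real)"
    by simp_all
  have "s \<noteq> 0" unfolding s_def by simp
  then have "q = 0" using h1 rb0 by simp
  then have "p = 0" using h2 by simp
  note pq = \<open>q = 0\<close> this
  then show False using assms(1) pq by simp
qed

lemma Vr_nz:
  assumes "(p,q) \<noteq> (0::int,0::int)"
  shows "Vr a b D p q \<noteq> 0"
proof -
  have 1: "of_int p - of_int q * (of_rat a + of_rat b * sqrt (of_int D)) \<noteq> (0::real)"
    by (rule xi_nz[OF assms]) simp
  have 2: "of_int p - of_int q * (of_rat a + of_rat b * (- sqrt (of_int D))) \<noteq> (0::real)"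
    by (rule xi_nz[OF assms]) simp
  have e: "alpc a b D = of_rat a + of_rat b * (- sqrt (of_int D))" unfolding alpc_def by simp
  show ?thesis unfolding Vr_def e unfolding alp_def using 1 2 by (simp only: mult_eq_0_iff) simp
qed

lemma Vr_rat: "Vr a b D p q = of_rat ((of_int p - of_int q * a)^2 - of_int q^2 * b^2 * of_int D)"
proof -
  have "Vr a b D p q = (of_int p - of_int q * of_rat a)^2 - of_int q^2 * (of_rat b)^2 * (sqrt (of_int D))^2"
    unfolding Vr_def alp_def alpc_def by (simp add: algebra_simps power2_eq_square)
  then show ?thesis unfolding rsq by (simp add: of_rat_diff of_rat_mult of_rat_power)
qed

end

context
  fixes a b :: rat and D :: int
  assumes b0: "b \<noteq> 0" and D2: "D \<ge> 2" and sqf: "squarefree D"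
begin

lemma norm_rat:
  fixes p q :: int and s :: "rat \<times> rat"
  assumes h1: "2 * fst s = of_int q" and h2: "2 * (fst s * a + of_int D * snd s * b) = of_int p"
  shows "qf_norm D s = - ((of_int p - of_int q * a)^2 - of_int q^2 * b^2 * of_int D) / (4 * b^2 * of_int D)"
proof -
  have D0: "(of_int D :: rat) \<noteq> 0" using D2 by simp
  have s1: "fst s = of_int q / 2" using h1 by simp
  have s2: "snd s = (of_int p - of_int q * a) / (2 * b * of_int D)"
    using h2 b0 D0 unfolding s1 by (simp add: field_simps)
  show ?thesis unfolding qf_norm_def s1 s2 using b0 D0 by (simp add: field_simps power2_eq_square)
qed

lemma norm_real:
  fixes N :: rat
  shows "2 * of_rat b * sqrt (of_int D) * of_rat (- N / (4 * b^2 * of_int D)) = - of_rat N / (2 * of_rat b * sqrt (of_int D))"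
proof -
  have r: "sqrt (of_int D) > 0" "(sqrt (of_int D))^2 = (of_int D :: real)" using D2 by simp_all
  have rb: "(of_rat b :: real) \<noteq> 0" using b0 by simp
  have X: "of_rat (- N / (4 * b^2 * of_int D)) = - of_rat N / (4 * (of_rat b)^2 * (sqrt (of_int D))^2)"
    unfolding r(2) by (simp add: of_rat_minus of_rat_divide of_rat_mult of_rat_power of_rat_of_int_eq)
  show ?thesis unfolding X using r rb by (simp add: field_simps power2_eq_square)
qed

lemma rhs_eq:
  "{\<sigma> * 2 * of_rat b * sqrt (of_int D) * of_rat (qf_norm D s) | \<sigma> s.
       \<sigma> \<in> {1, -1} \<and> s \<in> dual_lattice D a b \<and> s \<noteq> (0, 0)} = Tset a b D"
proof (intro equalityI subsetI)
  fix x assume "x \<in> {\<sigma> * 2 * of_rat b * sqrt (of_int D) * of_rat (qf_norm D s) | \<sigma> s.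
       \<sigma> \<in> {1, -1} \<and> s \<in> dual_lattice D a b \<and> s \<noteq> (0, 0)}"
  then obtain \<sigma> s where x: "x = \<sigma> * 2 * of_rat b * sqrt (of_int D) * of_rat (qf_norm D s)"
    and \<sigma>: "\<sigma> \<in> {1, -1}" and s: "s \<in> dual_lattice D a b" and s0: "s \<noteq> (0,0)" by blast
  from s have "qf_trace s \<in> \<int>" "qf_trace (qf_mult D s (a, b)) \<in> \<int>" unfolding dual_lattice_def by auto
  then obtain q p where q: "2 * fst s = of_int q" and p: "2 * (fst s * a + of_int D * snd s * b) = of_int p"
    unfolding qf_trace_def qf_mult_def by (auto elim!: Ints_cases)
  have pq: "(p,q) \<noteq> (0,0)"
  proof
    assume "(p,q) = (0,0)"
    then have "fst s = 0" "of_int D * snd s * b = 0" using p q by auto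
    then have "snd s = 0" using b0 D2 by simp
    then show False using s0 \<open>fst s = 0\<close> by (simp add: prod_eq_iff)
  qed
  define Nq where "Nq = (of_int p - of_int q * a)^2 - of_int q^2 * b^2 * of_int D"
  have "x = \<sigma> * (2 * of_rat b * sqrt (of_int D) * of_rat (- Nq / (4 * b^2 * of_int D)))"
    unfolding x norm_rat[OF q p] Nq_def by (simp add: mult.assoc)
  also have "\<dots> = \<sigma> * (- Vr a b D p q) / (2 * of_rat b * sqrt (of_int D))"
    unfolding norm_real Vr_rat[OF b0 D2 sqf] Nq_def by simp
  finally have "x = \<sigma> * (- Vr a b D p q) / (2 * of_rat b * sqrt (of_int D))" .
  then show "x \<in> Tset a b D" unfolding Tset_def using \<sigma> pq by blast
next
  fix x assume "x \<in> Tset a b D"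
  then obtain \<sigma> p q where x: "x = \<sigma> * (- Vr a b D p q) / (2 * of_rat b * sqrt (of_int D))"
    and \<sigma>: "\<sigma> \<in> {1, -1}" and pq: "(p,q) \<noteq> (0::int,0::int)" unfolding Tset_def by blast
  have D0: "(of_int D :: rat) \<noteq> 0" using D2 by simp
  define s :: "rat \<times> rat" where "s = (of_int q / 2, (of_int p - of_int q * a) / (2 * b * of_int D))"
  have q: "2 * fst s = of_int q" unfolding s_def by simp
  have p: "2 * (fst s * a + of_int D * snd s * b) = of_int p" unfolding s_def using b0 D0
    by (simp add: field_simps)
  have "s \<in> dual_lattice D a b" unfolding dual_lattice_def qf_trace_def qf_mult_def
    using q p by (simp del: of_int_mult)
  moreover have "s \<noteq> (0,0)"
  proof
    assume "s = (0,0)"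
    then have "q = 0" "of_int p - of_int q * a = 0" unfolding s_def using b0 D0 by auto
    then show False using pq by simp
  qed
  moreover have "x = \<sigma> * 2 * of_rat b * sqrt (of_int D) * of_rat (qf_norm D s)"
  proof -
    define Nq where "Nq = (of_int p - of_int q * a)^2 - of_int q^2 * b^2 * of_int D"
    have "\<sigma> * 2 * of_rat b * sqrt (of_int D) * of_rat (qf_norm D s) =
      \<sigma> * (2 * of_rat b * sqrt (of_int D) * of_rat (- Nq / (4 * b^2 * of_int D)))"
      unfolding norm_rat[OF q p] Nq_def by (simp add: mult.assoc)
    also have "\<dots> = \<sigma> * (- Vr a b D p q) / (2 * of_rat b * sqrt (of_int D))"
      unfolding norm_real Vr_rat[OF b0 D2 sqf] Nq_def by simp
    finally show ?thesis unfolding x by simp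
  qed
  ultimately show "x \<in> {\<sigma> * 2 * of_rat b * sqrt (of_int D) * of_rat (qf_norm D s) | \<sigma> s.
       \<sigma> \<in> {1, -1} \<and> s \<in> dual_lattice D a b \<and> s \<noteq> (0, 0)}" using \<sigma> by blast
qed

end

lemma pell_exists:
  fixes \<theta> :: real and E :: int
  assumes th0: "\<theta> > 0" and thE: "\<theta>^2 = of_int E" and irr: "\<theta> \<notin> \<rat>"
  obtains X Y :: int where "Y \<noteq> 0" "X^2 - E * Y^2 = 1"
proof -
  define P where "P = {(h::int,k::int). k > 0 \<and> \<bar>of_int k * \<theta> - of_int h\<bar> < 1 / of_int k}"
  have nz: "of_int k * \<theta> - of_int h \<noteq> 0" if "k > 0" for h k :: int
  proof
    assume "of_int k * \<theta> - of_int h = 0"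
    then have "\<theta> = of_int h / of_int k" using that by (simp add: field_simps)
    then show False using irr by simp
  qed
  have approx: "\<exists>(h,k)\<in>P. \<bar>of_int k * \<theta> - of_int h\<bar> < \<delta>" if "\<delta> > 0" for \<delta> :: real
  proof -
    obtain N :: nat where N: "1 / \<delta> < N" using reals_Archimedean2 by blast
    then have N0: "N > 0" using that
      by (metis divide_pos_pos gr0I of_nat_0 order_less_asym zero_less_one)
    obtain h k where k: "0 < k" "k \<le> int N" "\<bar>of_int k * \<theta> - of_int h\<bar> < 1/N"
      using Dirichlet_approx[OF N0] by blast
    have "1 / real N \<le> 1 / of_int k" using k by (simp add: frac_le)
    moreover have "1 / real N < \<delta>" using N that N0
      by (metis divide_less_eq mult.commute of_nat_0_less_iff)
    ultimately have "(h,k) \<in> P" "\<bar>of_int k * \<theta> - of_int h\<bar> < \<delta>" using k unfolding P_def by auto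
    then show ?thesis by blast
  qed
  have infP: "infinite P"
  proof
    assume fin: "finite P"
    define F where "F = (\<lambda>(h,k). \<bar>of_int k * \<theta> - of_int h\<bar>) ` P"
    have "P \<noteq> {}" using approx[of 1] by auto
    then have fF: "finite F" "F \<noteq> {}" using fin unfolding F_def by auto
    have Fpos: "\<forall>f\<in>F. f > 0" unfolding F_def P_def using nz by auto
    have "Min F > 0" using fF Fpos by simp
    then obtain h k where hk: "(h,k) \<in> P" "\<bar>of_int k * \<theta> - of_int h\<bar> < Min F"
      using approx by blast
    then have "\<bar>of_int k * \<theta> - of_int h\<bar> \<in> F" unfolding F_def by force
    then have "Min F \<le> \<bar>of_int k * \<theta> - of_int h\<bar>" using fF by simp
    then show False using hk by simp
  qed
  define C where "C = \<lfloor>2 * \<theta> + 1\<rfloor>"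
  define f where "f = (\<lambda>(h,k). h^2 - E * k^2 :: int)"
  have bound: "\<bar>f (h,k)\<bar> \<le> C" if "(h,k) \<in> P" for h k
  proof -
    from that have k: "k > 0" and d: "\<bar>of_int k * \<theta> - of_int h\<bar> < 1 / of_int k" unfolding P_def by auto
    have k1: "(1::real) \<le> of_int k" using k by simp
    have eq: "of_int (f (h,k)) = (of_int h - of_int k * \<theta>) * (of_int h + of_int k * \<theta>)"
      unfolding f_def using thE by (simp add: algebra_simps power2_eq_square)
    have a1: "\<bar>of_int h - of_int k * \<theta>\<bar> < 1 / of_int k" using d by simp
    have a2: "\<bar>of_int h + of_int k * \<theta>\<bar> \<le> 1 / of_int k + 2 * of_int k * \<theta>"
    proof -
      have "\<bar>of_int h + of_int k * \<theta>\<bar> \<le> \<bar>of_int h - of_int k * \<theta>\<bar> + \<bar>2 * of_int k * \<theta>\<bar>"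
      proof -
        have "of_int h + of_int k * \<theta> = (of_int h - of_int k * \<theta>) + 2 * of_int k * \<theta>" by simp
        then show ?thesis by (metis abs_triangle_ineq)
      qed
      also have "\<dots> \<le> 1 / of_int k + 2 * of_int k * \<theta>" using a1 k th0 by simp
      finally show ?thesis .
    qed
    have "\<bar>real_of_int (f (h,k))\<bar> \<le> (1 / of_int k) * (1 / of_int k + 2 * of_int k * \<theta>)"
      unfolding eq abs_mult using a1 a2 k by (intro mult_mono) auto
    also have "\<dots> = 1 / (of_int k)^2 + 2 * \<theta>" using k by (simp add: field_simps power2_eq_square)
    also have "\<dots> \<le> 1 + 2 * \<theta>" using k1 by (simp add: power_le_one_iff divide_le_eq)
    finally have "\<bar>real_of_int (f (h,k))\<bar> \<le> 2 * \<theta> + 1" by simp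
    then show ?thesis unfolding C_def by (metis le_floor_iff of_int_abs)
  qed
  have "f ` P \<subseteq> {-C..C}" using bound by (force simp: abs_le_iff)
  then have "finite (f ` P)" by (rule finite_subset) simp
  from pigeonhole_infinite[OF infP this] obtain a0 where a0: "a0 \<in> P" and
    inf1: "infinite {a\<in>P. f a = f a0}" by blast
  define m where "m = f a0"
  define P1 where "P1 = {a\<in>P. f a = m}"
  have m0: "m \<noteq> 0"
  proof
    assume "m = 0"
    obtain h k where a0e: "a0 = (h,k)" by fastforce
    have k: "k > 0" using a0 a0e unfolding P_def by auto
    have "h^2 = E * k^2" using \<open>m = 0\<close> unfolding m_def f_def a0e by simp
    then have "(of_int h)^2 = (\<theta> * of_int k)^2" using thE
      by (metis of_int_mult of_int_power power_mult_distrib)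
    then have "\<bar>of_int h\<bar> = \<bar>\<theta> * of_int k\<bar>" using power2_eq_iff by (metis abs_minus_cancel abs_of_nonneg abs_ge_zero) 
    then have "\<theta> = \<bar>of_int h\<bar> / of_int k" using k th0 by (simp add: abs_mult field_simps)
    then show False using irr by simp
  qed
  have infP1: "infinite P1" using inf1 unfolding P1_def m_def .
  define g where "g = (\<lambda>(h,k). (h mod \<bar>m\<bar>, k mod \<bar>m\<bar>))"
  have "g ` P1 \<subseteq> {0..<\<bar>m\<bar>} \<times> {0..<\<bar>m\<bar>}" using m0 by (auto simp: g_def)
  then have "finite (g ` P1)" by (rule finite_subset) simp
  from pigeonhole_infinite[OF infP1 this] obtain a1 where a1: "a1 \<in> P1" and
    inf2: "infinite {a\<in>P1. g a = g a1}" by blast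
  have "{a\<in>P1. g a = g a1} - {a1} \<noteq> {}" using inf2
    by (metis finite.emptyI finite_Diff2 finite_insert)
  then obtain a2 where a2: "a2 \<in> P1" "g a2 = g a1" "a2 \<noteq> a1" by blast
  obtain h1 k1 where a1e: "a1 = (h1,k1)" by fastforce
  obtain h2 k2 where a2e: "a2 = (h2,k2)" by fastforce
  have k1: "k1 > 0" and m1: "h1^2 - E * k1^2 = m" using a1 a1e unfolding P1_def P_def f_def by auto
  have k2: "k2 > 0" and m2: "h2^2 - E * k2^2 = m" using a2 a2e unfolding P1_def P_def f_def by auto
  have "h2 mod \<bar>m\<bar> = h1 mod \<bar>m\<bar>" "k2 mod \<bar>m\<bar> = k1 mod \<bar>m\<bar>" using a2 a1e a2e unfolding g_def by auto
  then have "\<bar>m\<bar> dvd h2 - h1" "\<bar>m\<bar> dvd k2 - k1" by (simp_all add: mod_eq_dvd_iff)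
  then obtain u w where u: "h2 = h1 + m * u" and w: "k2 = k1 + m * w"
    by (metis abs_dvd_iff add.commute diff_add_cancel dvd_def)
  have dX: "m dvd h1 * h2 - E * k1 * k2"
  proof -
    have "h1 * h2 - E * k1 * k2 = m * (1 + h1 * u - E * k1 * w)"
      unfolding u w using m1 by (simp add: algebra_simps power2_eq_square)
    then show ?thesis by simp
  qed
  have dY: "m dvd k1 * h2 - h1 * k2"
  proof -
    have "k1 * h2 - h1 * k2 = m * (k1 * u - h1 * w)"
      unfolding u w by (simp add: algebra_simps)
    then show ?thesis by simp
  qed
  obtain X where X: "h1 * h2 - E * k1 * k2 = m * X" using dX by blast
  obtain Y where Y: "k1 * h2 - h1 * k2 = m * Y" using dY by blast
  have "m^2 * (X^2 - E * Y^2) = (h1 * h2 - E * k1 * k2)^2 - E * (k1 * h2 - h1 * k2)^2"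
    unfolding X Y by (simp add: algebra_simps power2_eq_square)
  also have "\<dots> = (h1^2 - E * k1^2) * (h2^2 - E * k2^2)" by (simp add: algebra_simps power2_eq_square)
  also have "\<dots> = m^2 * 1" using m1 m2 by (simp add: power2_eq_square)
  finally have pe: "X^2 - E * Y^2 = 1" using m0 by (metis mult_left_cancel power_not_zero)
  have Y0: "Y \<noteq> 0"
  proof
    assume "Y = 0"
    then have c: "k1 * h2 = h1 * k2" using Y by simp
    have "k1^2 * m = k2^2 * m"
    proof -
      have "k1^2 * m = k1^2 * (h2^2 - E * k2^2)" using m2 by simp
      also have "\<dots> = (k1 * h2)^2 - E * k1^2 * k2^2" by (simp add: algebra_simps power2_eq_square)
      also have "\<dots> = (h1 * k2)^2 - E * k1^2 * k2^2" using c by simp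
      also have "\<dots> = k2^2 * (h1^2 - E * k1^2)" by (simp add: algebra_simps power2_eq_square)
      also have "\<dots> = k2^2 * m" using m1 by simp
      finally show ?thesis .
    qed
    then have "k1^2 = k2^2" using m0 by simp
    then have "k1 = k2" using k1 k2 by (metis abs_of_pos power2_eq_iff abs_minus_cancel)
    then have "h1 = h2" using c k1 by simp
    then show False using a2 a1e a2e \<open>k1 = k2\<close> by simp
  qed
  show ?thesis using that Y0 pe by blast
qed

lemma step_id:
  fixes X Y M m1 m2 m3 p q :: int and t ra rb :: real
  assumes tD: "t^2 = of_int D" and rb: "rb \<noteq> 0"
    and h1: "of_int m1 = of_int M / rb" and h2: "of_int m2 = of_int M * ra / rb"
    and h3: "of_int m3 = of_int M * (ra^2 - rb^2 * of_int D) / rb"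
  shows "(of_int X + of_int M * of_int Y * t) * (of_int p - of_int q * (ra + rb * t)) =
     of_int ((X - Y*m2)*p + Y*m3*q) - of_int ((X + Y*m2)*q - Y*m1*p) * (ra + rb*t)"
proof -
  have e3: "of_int m3 = of_int M * (ra^2 - rb^2 * t^2) / rb" using h3 tD by simp
  show ?thesis unfolding of_int_add of_int_mult of_int_diff h1 h2 e3
    using rb by (simp add: field_simps power2_eq_square)
qed

lemma unit_choice:
  fixes e e' :: real
  assumes ee: "e * e' = 1" and ne: "e \<noteq> e'"
  shows "(0 < e \<and> e < 1) \<or> (0 < -e \<and> -e < 1) \<or> (0 < e' \<and> e' < 1) \<or> (0 < -e' \<and> -e' < 1)"
proof -
  have e0: "e \<noteq> 0" "e' \<noteq> 0" using ee by auto
  have e'e: "e' = 1 / e" using ee e0 by (simp add: field_simps)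
  have ae: "\<bar>e'\<bar> = 1 / \<bar>e\<bar>" unfolding e'e by simp
  have "\<bar>e\<bar> \<noteq> 1"
  proof
    assume h: "\<bar>e\<bar> = 1"
    then have "e = 1 \<or> e = -1" by linarith
    then have "e' = e" unfolding e'e by auto
    then show False using ne by simp
  qed
  have "\<bar>e\<bar> < 1 \<or> \<bar>e'\<bar> < 1"
  proof (cases "\<bar>e\<bar> < 1")
    case False
    then have "\<bar>e\<bar> > 1" using \<open>\<bar>e\<bar> \<noteq> 1\<close> by linarith
    then have "\<bar>e'\<bar> < 1" unfolding ae by simp
    then show ?thesis by blast
  qed blast
  moreover have "\<bar>e\<bar> < 1 \<Longrightarrow> (0 < e \<and> e < 1) \<or> (0 < -e \<and> -e < 1)" using e0 by linarith
  moreover have "\<bar>e'\<bar> < 1 \<Longrightarrow> (0 < e' \<and> e' < 1) \<or> (0 < -e' \<and> -e' < 1)" using e0 by linarith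
  ultimately show ?thesis by blast
qed

context
  fixes a b :: rat and D :: int
  assumes b0: "b \<noteq> 0" and D2: "D \<ge> 2" and sqf: "squarefree D"
begin

lemma A1_sup:
  assumes pq0: "(p0,q0) \<noteq> (0::int,0::int)"
  defines "c \<equiv> - Vr a b D p0 q0 / (2 * of_rat b * sqrt (of_int D))"
  shows "c islimpt Sset (alp a b D) \<and> (-c) islimpt Sset (alp a b D)"
proof -
  define r where "r = sqrt (real_of_int D)"
  define ra where "ra = (of_rat a :: real)"
  define rb where "rb = (of_rat b :: real)"
  have r0: "r > 0" and rr: "r^2 = of_int D" unfolding r_def using D2 by simp_all
  have rb0: "rb \<noteq> 0" unfolding rb_def using b0 by simp
  have alp: "alp a b D = ra + rb * r" unfolding alp_def ra_def rb_def r_def ..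
  have alpc: "alpc a b D = ra + rb * (-r)" unfolding alpc_def ra_def rb_def r_def by simp
  obtain M :: int where M0: "M > 0" and Mi: "of_int M * (1/b) \<in> \<int>" "of_int M * (a/b) \<in> \<int>"
      "of_int M * ((a^2 - b^2 * of_int D)/b) \<in> \<int>"
    using rat_den3 by blast
  obtain m1 :: int where m1: "of_int M * (1/b) = of_int m1" using Mi(1) by (rule Ints_cases)
  obtain m2 :: int where m2: "of_int M * (a/b) = of_int m2" using Mi(2) by (rule Ints_cases)
  obtain m3 :: int where m3: "of_int M * ((a^2 - b^2 * of_int D)/b) = of_int m3" using Mi(3) by (rule Ints_cases)
  have rm1: "(of_int m1 :: real) = of_int M / rb"
  proof -
    have "(of_int m1 :: real) = of_rat (of_int M * (1/b))" unfolding m1 by simp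
    then show ?thesis unfolding rb_def by (simp add: of_rat_mult of_rat_divide)
  qed
  have rm2: "(of_int m2 :: real) = of_int M * ra / rb"
  proof -
    have "(of_int m2 :: real) = of_rat (of_int M * (a/b))" unfolding m2 by simp
    then show ?thesis unfolding rb_def ra_def by (simp add: of_rat_mult of_rat_divide)
  qed
  have rm3: "(of_int m3 :: real) = of_int M * (ra^2 - rb^2 * of_int D) / rb"
  proof -
    have "(of_int m3 :: real) = of_rat (of_int M * ((a^2 - b^2 * of_int D)/b))" unfolding m3 by simp
    then show ?thesis unfolding rb_def ra_def
      by (simp add: of_rat_mult of_rat_divide of_rat_diff of_rat_power)
  qed
  define \<theta> where "\<theta> = of_int M * r"
  have th0: "\<theta> > 0" unfolding \<theta>_def using M0 r0 by simp
  have thE: "\<theta>^2 = of_int (M^2 * D)" unfolding \<theta>_def using rr by (simp add: power_mult_distrib)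
  have thirr: "\<theta> \<notin> \<rat>"
  proof
    assume "\<theta> \<in> \<rat>"
    then have "\<theta> / of_int M \<in> \<rat>" by simp
    moreover have "\<theta> / of_int M = r" unfolding \<theta>_def using M0 by simp
    ultimately show False using rirr[OF b0 D2 sqf] unfolding r_def by simp
  qed
  obtain X Y :: int where Y0: "Y \<noteq> 0" and pell: "X^2 - (M^2 * D) * Y^2 = 1"
    by (rule pell_exists[OF th0 thE thirr])
  have normid: "(of_int X + of_int M * of_int Y * t) * (of_int X + of_int M * of_int Y * (-t)) = (1::real)"
    if "t^2 = of_int D" "X^2 - (M^2 * D) * Y^2 = 1" for X Y :: int and t :: real
  proof -
    have "(of_int X + of_int M * of_int Y * t) * (of_int X + of_int M * of_int Y * (-t)) =
       (of_int X)^2 - (of_int M)^2 * (of_int Y)^2 * t^2" by (simp add: algebra_simps power2_eq_square)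
    also have "\<dots> = of_int (X^2 - (M^2 * D) * Y^2)" using that(1) by simp
    also have "\<dots> = 1" using that(2) by simp
    finally show ?thesis .
  qed
  have "\<exists>X' Y' :: int. X'^2 - (M^2 * D) * Y'^2 = 1 \<and> 0 < of_int X' + of_int M * of_int Y' * r
      \<and> of_int X' + of_int M * of_int Y' * r < 1"
  proof -
    define e0 where "e0 = of_int X + of_int M * of_int Y * r"
    define e0' where "e0' = of_int X + of_int M * of_int Y * (-r)"
    have p1: "e0 * e0' = 1" unfolding e0_def e0'_def by (rule normid[OF rr pell])
    have "of_int M * of_int Y * r \<noteq> 0" using M0 Y0 r0 by simp
    then have p2: "e0 \<noteq> e0'" unfolding e0_def e0'_def by simp
    have pm: "(-X)^2 - (M^2 * D) * (-Y)^2 = 1" "X^2 - (M^2 * D) * (-Y)^2 = 1" "(-X)^2 - (M^2 * D) * Y^2 = 1"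
      using pell by simp_all
    have c1: "of_int (-X) + of_int M * of_int (-Y) * r = - e0" unfolding e0_def by simp
    have c2: "of_int X + of_int M * of_int (-Y) * r = e0'" unfolding e0'_def by simp
    have c3: "of_int (-X) + of_int M * of_int Y * r = - e0'" unfolding e0'_def by simp
    from unit_choice[OF p1 p2] show ?thesis
    proof (elim disjE)
      assume "0 < e0 \<and> e0 < 1" then show ?thesis using pell unfolding e0_def by blast
    next
      assume "0 < - e0 \<and> - e0 < 1" then show ?thesis using pm(1) c1 by metis
    next
      assume "0 < e0' \<and> e0' < 1" then show ?thesis using pm(2) c2 by metis
    next
      assume "0 < - e0' \<and> - e0' < 1" then show ?thesis using pm(3) c3 by metis
    qed
  qed
  then obtain X' Y' :: int where pell': "X'^2 - (M^2 * D) * Y'^2 = 1"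
    and eps: "0 < of_int X' + of_int M * of_int Y' * r" "of_int X' + of_int M * of_int Y' * r < 1"
    by blast
  define \<epsilon> where "\<epsilon> = of_int X' + of_int M * of_int Y' * r"
  define \<epsilon>' where "\<epsilon>' = of_int X' + of_int M * of_int Y' * (-r)"
  have ee: "\<epsilon> * \<epsilon>' = 1" unfolding \<epsilon>_def \<epsilon>'_def by (rule normid[OF rr pell'])
  define \<xi>0 where "\<xi>0 = of_int p0 - of_int q0 * alp a b D"
  define \<xi>0' where "\<xi>0' = of_int p0 - of_int q0 * alpc a b D"
  have iter: "\<forall>k. \<exists>pq::int\<times>int. of_int (fst pq) - of_int (snd pq) * alp a b D = \<epsilon>^k * \<xi>0
      \<and> of_int (fst pq) - of_int (snd pq) * alpc a b D = \<epsilon>'^k * \<xi>0'"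
  proof
    fix k show "\<exists>pq::int\<times>int. of_int (fst pq) - of_int (snd pq) * alp a b D = \<epsilon>^k * \<xi>0
      \<and> of_int (fst pq) - of_int (snd pq) * alpc a b D = \<epsilon>'^k * \<xi>0'"
    proof (induction k)
      case 0
      show ?case by (rule exI[of _ "(p0,q0)"]) (simp add: \<xi>0_def \<xi>0'_def)
    next
      case (Suc k)
      then obtain pq :: "int \<times> int" where
        h1: "of_int (fst pq) - of_int (snd pq) * alp a b D = \<epsilon>^k * \<xi>0" and
        h2: "of_int (fst pq) - of_int (snd pq) * alpc a b D = \<epsilon>'^k * \<xi>0'" by blast
      define p where "p = fst pq"
      define q where "q = snd pq"
      define p1 where "p1 = (X' - Y'*m2)*p + Y'*m3*q"
      define q1 where "q1 = (X' + Y'*m2)*q - Y'*m1*p"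
      have s1: "(of_int X' + of_int M * of_int Y' * r) * (of_int p - of_int q * (ra + rb * r)) =
          of_int p1 - of_int q1 * (ra + rb * r)"
        unfolding p1_def q1_def by (rule step_id[OF rr rb0 rm1 rm2 rm3])
      have rr': "(-r)^2 = of_int D" using rr by simp
      have s2: "(of_int X' + of_int M * of_int Y' * (-r)) * (of_int p - of_int q * (ra + rb * (-r))) =
          of_int p1 - of_int q1 * (ra + rb * (-r))"
        unfolding p1_def q1_def by (rule step_id[OF rr' rb0 rm1 rm2 rm3])
      have "of_int p1 - of_int q1 * alp a b D = \<epsilon>^(Suc k) * \<xi>0"
      proof -
        have "\<epsilon>^(Suc k) * \<xi>0 = \<epsilon> * (\<epsilon>^k * \<xi>0)" by simp
        also have "\<dots> = \<epsilon> * (of_int p - of_int q * alp a b D)" using h1 unfolding p_def q_def by simp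
        also have "\<dots> = of_int p1 - of_int q1 * alp a b D" unfolding \<epsilon>_def alp using s1 .
        finally show ?thesis by simp
      qed
      moreover have "of_int p1 - of_int q1 * alpc a b D = \<epsilon>'^(Suc k) * \<xi>0'"
      proof -
        have "\<epsilon>'^(Suc k) * \<xi>0' = \<epsilon>' * (\<epsilon>'^k * \<xi>0')" by simp
        also have "\<dots> = \<epsilon>' * (of_int p - of_int q * alpc a b D)" using h2 unfolding p_def q_def by simp
        also have "\<dots> = of_int p1 - of_int q1 * alpc a b D" unfolding \<epsilon>'_def alpc using s2 .
        finally show ?thesis by simp
      qed
      ultimately show ?case by (intro exI[of _ "(p1,q1)"]) simp
    qed
  qed
  from choice[OF iter] obtain f where f: "\<And>k. of_int (fst (f k)) - of_int (snd (f k)) * alp a b D = \<epsilon>^k * \<xi>0"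
    "\<And>k. of_int (fst (f k)) - of_int (snd (f k)) * alpc a b D = \<epsilon>'^k * \<xi>0'" by blast
  define w where "w k = - of_int (snd (f k)) * (\<epsilon>^k * \<xi>0)" for k
  have V: "Vr a b D p0 q0 = \<xi>0 * \<xi>0'" unfolding Vr_def \<xi>0_def \<xi>0'_def ..
  have den: "2 * rb * r \<noteq> 0" using rb0 r0 by simp
  have cden: "c * (2 * rb * r) = - (\<xi>0 * \<xi>0')" unfolding c_def V rb_def[symmetric] r_def[symmetric]
    using den by simp
  have wc: "w k - c = (\<epsilon>^2)^k * \<xi>0^2 / (2 * rb * r)" for k
  proof -
    define P where "P = fst (f k)"
    define Q where "Q = snd (f k)"
    have A: "of_int P - of_int Q * alp a b D = \<epsilon>^k * \<xi>0" using f(1)[of k] unfolding P_def Q_def .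
    have B: "of_int P - of_int Q * alpc a b D = \<epsilon>'^k * \<xi>0'" using f(2)[of k] unfolding P_def Q_def .
    have "of_int Q * alp a b D - of_int Q * alpc a b D = \<epsilon>'^k * \<xi>0' - \<epsilon>^k * \<xi>0" using A B by linarith
    moreover have "alp a b D - alpc a b D = 2 * rb * r" unfolding alp alpc by simp
    ultimately have Qe: "of_int Q * (2 * rb * r) = \<epsilon>'^k * \<xi>0' - \<epsilon>^k * \<xi>0"
      by (metis right_diff_distrib)
    have kk: "\<epsilon>^k * \<epsilon>'^k = 1" by (metis ee power_mult_distrib power_one)
    have "w k * (2 * rb * r) = - (of_int Q * (2 * rb * r)) * (\<epsilon>^k * \<xi>0)"
      unfolding w_def Q_def by (simp add: algebra_simps)
    also have "\<dots> = (\<epsilon>^k)^2 * \<xi>0^2 - (\<epsilon>^k * \<epsilon>'^k) * (\<xi>0 * \<xi>0')"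
      unfolding Qe by (simp add: algebra_simps power2_eq_square)
    also have "\<dots> = (\<epsilon>^2)^k * \<xi>0^2 - \<xi>0 * \<xi>0'" unfolding kk by (simp add: power_mult[symmetric] mult.commute)
    finally have "(w k - c) * (2 * rb * r) = (\<epsilon>^2)^k * \<xi>0^2"
      using cden by (simp add: algebra_simps)
    then show ?thesis using den by (simp add: field_simps)
  qed
  have wS: "w k \<in> Sset (alp a b D) \<and> - w k \<in> Sset (alp a b D)" if Q0: "snd (f k) \<noteq> 0" for k
  proof -
    define P where "P = fst (f k)"
    define Q where "Q = snd (f k)"
    have Q0': "Q \<noteq> 0" using Q0 unfolding Q_def .
    have A: "of_int P - of_int Q * alp a b D = \<epsilon>^k * \<xi>0" using f(1)[of k] unfolding P_def Q_def .
    define \<xi> where "\<xi> = \<epsilon>^k * \<xi>0"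
    have wk: "w k = - of_int Q * \<xi>" unfolding w_def Q_def \<xi>_def ..
    have S1: "\<bar>of_int Q\<bar> * (of_int Q * alp a b D - of_int P) \<in> Sset (alp a b D)"
      unfolding Sset_def using Q0' by blast
    have S2: "\<bar>of_int (-Q)\<bar> * (of_int (-Q) * alp a b D - of_int (-P)) \<in> Sset (alp a b D)"
      unfolding Sset_def using Q0' by (intro CollectI exI conjI) (rule refl, simp)
    have e1: "\<bar>of_int Q\<bar> * (of_int Q * alp a b D - of_int P) = - (\<bar>of_int Q\<bar> * \<xi>)"
      unfolding \<xi>_def A[symmetric] by (simp add: algebra_simps)
    have e2: "\<bar>of_int (-Q)\<bar> * (of_int (-Q) * alp a b D - of_int (-P)) = \<bar>of_int Q\<bar> * (\<xi>::real)"
      unfolding \<xi>_def A[symmetric] by (simp add: algebra_simps)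
    have T1: "- (\<bar>of_int Q\<bar> * \<xi>) \<in> Sset (alp a b D)" using S1 unfolding e1 .
    have T2: "\<bar>of_int Q\<bar> * \<xi> \<in> Sset (alp a b D)" using S2 unfolding e2 .
    show ?thesis
    proof (cases "Q > 0")
      case True
      then have eq: "w k = - (\<bar>of_int Q\<bar> * \<xi>)" unfolding wk by simp
      show ?thesis unfolding eq using T1 T2 by simp
    next
      case False
      then have "Q < 0" using Q0' by simp
      then have eq: "w k = \<bar>of_int Q\<bar> * \<xi>" unfolding wk by simp
      show ?thesis unfolding eq using T1 T2 by simp
    qed
  qed
  have c0: "c \<noteq> 0"
  proof
    assume "c = 0"
    then have "\<xi>0 * \<xi>0' = 0" using cden by simp
    moreover have "Vr a b D p0 q0 \<noteq> 0" by (rule Vr_nz[OF b0 D2 sqf pq0])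
    ultimately show False unfolding V by simp
  qed
  have xi0: "\<xi>0 \<noteq> 0" using xi_nz[OF b0 D2 sqf pq0, of "sqrt (of_int D)"]
    unfolding \<xi>0_def alp_def by simp
  define K0 where "K0 = \<xi>0^2 / (2 * \<bar>rb\<bar> * r)"
  have K0: "K0 > 0" unfolding K0_def using xi0 rb0 r0 by simp
  have e2: "\<epsilon>^2 < 1" "\<epsilon>^2 > 0" using eps unfolding \<epsilon>_def by (simp_all add: power_less_one_iff)
  have approx: "\<exists>k. w k \<noteq> c \<and> \<bar>w k - c\<bar> < e \<and> snd (f k) \<noteq> 0" if "e > 0" for e
  proof -
    define e1 where "e1 = min e (\<bar>c\<bar>/2)"
    have e1: "e1 > 0" unfolding e1_def using that c0 by simp
    obtain k where k: "(\<epsilon>^2)^k < e1 / K0" using real_arch_pow_inv[of "e1/K0" "\<epsilon>^2"] e1 K0 e2 by auto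
    have abs: "\<bar>w k - c\<bar> = (\<epsilon>^2)^k * K0" unfolding wc K0_def using r0
      by (simp add: abs_mult abs_divide)
    have pos: "(\<epsilon>^2)^k * K0 > 0" using e2 K0 by simp
    have lt: "\<bar>w k - c\<bar> < e1" unfolding abs using k K0 by (simp add: pos_less_divide_eq)
    have "w k \<noteq> 0" using lt unfolding e1_def by auto
    then have "snd (f k) \<noteq> 0" unfolding w_def by auto
    moreover have "w k \<noteq> c" using abs pos by auto
    ultimately show ?thesis using lt unfolding e1_def by auto
  qed
  show ?thesis
  proof
    show "c islimpt Sset (alp a b D)" unfolding islimpt_approachable_real
    proof (intro allI impI)
      fix e :: real assume "e > 0"
      then obtain k where "w k \<noteq> c" "\<bar>w k - c\<bar> < e" "snd (f k) \<noteq> 0" using approx by blast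
      then show "\<exists>x'\<in>Sset (alp a b D). x' \<noteq> c \<and> \<bar>x' - c\<bar> < e" using wS by blast
    qed
    show "(-c) islimpt Sset (alp a b D)" unfolding islimpt_approachable_real
    proof (intro allI impI)
      fix e :: real assume "e > 0"
      then obtain k where "w k \<noteq> c" "\<bar>w k - c\<bar> < e" "snd (f k) \<noteq> 0" using approx by blast
      then have m: "- w k \<in> Sset (alp a b D)" "- w k \<noteq> - c" "\<bar>- w k - - c\<bar> < e"
        using wS[of k] by (simp_all add: abs_minus_commute)
      show "\<exists>x'\<in>Sset (alp a b D). x' \<noteq> - c \<and> \<bar>x' - - c\<bar> < e"
        using m by blast
    qed
  qed
qed

end

context
  fixes a b :: rat and D :: int
  assumes b0: "b \<noteq> 0" and D2: "D \<ge> 2" and sqf: "squarefree D"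
begin

lemma A1_sub:
  assumes xl: "x islimpt Sset (alp a b D)"
  shows "x \<in> Tset a b D"
proof (rule ccontr)
  assume xT: "x \<notin> Tset a b D"
  define r where "r = sqrt (real_of_int D)"
  define ra where "ra = (of_rat a :: real)"
  define rb where "rb = (of_rat b :: real)"
  define \<alpha> where "\<alpha> = alp a b D"
  have r0: "r > 0" and rr: "r^2 = of_int D" unfolding r_def using D2 by simp_all
  have rb0: "rb \<noteq> 0" unfolding rb_def using b0 by simp
  have alp: "\<alpha> = ra + rb * r" unfolding \<alpha>_def alp_def ra_def rb_def r_def ..
  have alpc: "alpc a b D = ra - rb * r" unfolding alpc_def ra_def rb_def r_def ..
  have den: "2 * rb * r \<noteq> 0" using rb0 r0 by simp
  obtain L :: int where L0: "L > 0" and Li: "of_int L * (2 * a) \<in> \<int>" "of_int L * (a^2 - b^2 * of_int D) \<in> \<int>"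
    using rat_den3[of "2 * a" "a^2 - b^2 * of_int D" 1] by blast
  obtain l1 :: int where l1: "of_int L * (2 * a) = of_int l1" using Li(1) by (rule Ints_cases)
  obtain l2 :: int where l2: "of_int L * (a^2 - b^2 * of_int D) = of_int l2" using Li(2) by (rule Ints_cases)
  have NL: "\<exists>n::int. Vr a b D p q = of_int n / of_int L" for p q :: int
  proof -
    define n where "n = L * p^2 - l1 * p * q + l2 * q^2"
    have "of_int L * ((of_int p - of_int q * a)^2 - of_int q^2 * b^2 * of_int D) =
      of_int L * of_int p^2 - (of_int L * (2 * a)) * of_int p * of_int q + (of_int L * (a^2 - b^2 * of_int D)) * of_int q^2"
      by (simp add: algebra_simps power2_eq_square)
    also have "\<dots> = (of_int n :: rat)" unfolding l1 l2 n_def by simp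
    finally have e: "(of_int p - of_int q * a)^2 - of_int q^2 * b^2 * of_int D = (of_int n :: rat) / of_int L"
      using L0 by (simp add: field_simps)
    have "Vr a b D p q = of_rat (of_int n / of_int L)" unfolding Vr_rat[OF b0 D2 sqf] e ..
    then show ?thesis by (simp add: of_rat_divide)
  qed
  define R where "R = \<bar>x\<bar> + 1"
  have R0: "R > 0" unfolding R_def by simp
  define B where "B = R^2 + 2 * \<bar>rb\<bar> * r * R"
  define K where "K = \<lceil>of_int L * B\<rceil>"
  define C where "C = {\<sigma> * (- Vr a b D p q) / (2 * rb * r) | \<sigma> p q.
      \<sigma> \<in> {1,-1} \<and> (p,q) \<noteq> (0::int,0::int) \<and> \<bar>Vr a b D p q\<bar> \<le> B}"
  have CT: "C \<subseteq> Tset a b D" unfolding C_def Tset_def rb_def r_def by blast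
  have "C \<subseteq> (\<lambda>(\<sigma>,n). \<sigma> * (- (of_int n / of_int L)) / (2 * rb * r)) ` ({1,-1} \<times> {-K..K})"
  proof
    fix y assume "y \<in> C"
    then obtain \<sigma> p q where y: "y = \<sigma> * (- Vr a b D p q) / (2 * rb * r)" and \<sigma>: "\<sigma> \<in> {1,-1}"
      and VB: "\<bar>Vr a b D p q\<bar> \<le> B" unfolding C_def by blast
    obtain n where n: "Vr a b D p q = of_int n / of_int L" using NL by blast
    have "\<bar>of_int n / of_int L\<bar> \<le> B" using VB n by simp
    then have "\<bar>real_of_int n\<bar> \<le> of_int L * B" using L0 by (simp add: abs_divide divide_le_eq mult.commute)
    then have "\<bar>real_of_int n\<bar> \<le> of_int K" unfolding K_def by (meson le_of_int_ceiling order_trans)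
    then have "n \<in> {-K..K}" by (simp add: abs_le_iff)
    then show "y \<in> (\<lambda>(\<sigma>,n). \<sigma> * (- (of_int n / of_int L)) / (2 * rb * r)) ` ({1,-1} \<times> {-K..K})"
      unfolding y n using \<sigma> by force
  qed
  then have finC: "finite C" by (rule finite_subset) simp
  have xC: "x \<notin> C" using xT CT by blast
  obtain \<delta> where \<delta>0: "\<delta> > 0" and \<delta>: "\<forall>c\<in>C. c \<noteq> x \<longrightarrow> \<delta> \<le> dist x c"
    using finite_set_avoid[OF finC, of x] by blast
  define H where "H = R^2 / (2 * \<bar>rb\<bar> * r)"
  have H0: "H > 0" unfolding H_def using R0 rb0 r0 by simp
  obtain Q0 :: nat where Q0: "H / (\<delta> / 2) < real Q0" using reals_Archimedean2 by blast
  have Q0pos: "real Q0 > 0" using Q0 H0 \<delta>0 by (smt (verit) divide_pos_pos)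
  have HQ: "H / real Q0 < \<delta> / 2" using Q0 Q0pos \<delta>0 by (simp add: field_simps)
  define PB where "PB = \<lceil>real Q0 * \<bar>\<alpha>\<bar> + R\<rceil>"
  define QB where "QB = int Q0"
  define G where "G = (\<lambda>(q,p). \<bar>real_of_int q\<bar> * (real_of_int q * \<alpha> - real_of_int p)) ` ({-QB..QB} \<times> {-PB..PB})"
  have finG: "finite G" unfolding G_def by simp
  have "x islimpt (G \<union> (Sset \<alpha> - G))" using xl unfolding \<alpha>_def[symmetric]
    by (rule islimpt_subset) blast
  then have "x islimpt (Sset \<alpha> - G)" using islimpt_Un_finite[OF finG] by blast
  then obtain y where yS: "y \<in> Sset \<alpha>" and yG: "y \<notin> G" and yx: "y \<noteq> x" and
    dyx: "\<bar>y - x\<bar> < min 1 (\<delta>/2)"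
    unfolding islimpt_approachable_real using \<delta>0 by (metis DiffE min_less_iff_conj zero_less_divide_iff zero_less_numeral zero_less_one)
  obtain q p :: int where q0: "q \<noteq> 0" and y: "y = \<bar>real_of_int q\<bar> * (real_of_int q * \<alpha> - real_of_int p)"
    using yS unfolding Sset_def by blast
  have yR: "\<bar>y\<bar> < R" using dyx unfolding R_def by linarith
  define \<xi> where "\<xi> = real_of_int p - real_of_int q * \<alpha>"
  have y\<xi>: "y = - (\<bar>real_of_int q\<bar> * \<xi>)" unfolding y \<xi>_def by (simp add: algebra_simps)
  have q1: "\<bar>real_of_int q\<bar> \<ge> 1" using q0 by linarith
  have qxi: "\<bar>real_of_int q\<bar> * \<bar>\<xi>\<bar> < R" using yR unfolding y\<xi> by (simp add: abs_mult)
  have xiR: "\<bar>\<xi>\<bar> < R"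
  proof -
    have "\<bar>\<xi>\<bar> \<le> \<bar>real_of_int q\<bar> * \<bar>\<xi>\<bar>" using q1 by (simp add: mult_le_cancel_right1)
    then show ?thesis using qxi by linarith
  qed
  have qbig: "\<bar>real_of_int q\<bar> > real Q0"
  proof (rule ccontr)
    assume "\<not> \<bar>real_of_int q\<bar> > real Q0"
    then have qle: "\<bar>real_of_int q\<bar> \<le> real Q0" by simp
    have "\<bar>real_of_int p\<bar> \<le> \<bar>real_of_int q * \<alpha>\<bar> + \<bar>\<xi>\<bar>" unfolding \<xi>_def by linarith
    also have "\<dots> \<le> real Q0 * \<bar>\<alpha>\<bar> + R"
    proof -
      have "\<bar>real_of_int q\<bar> * \<bar>\<alpha>\<bar> \<le> real Q0 * \<bar>\<alpha>\<bar>" using qle by (rule mult_right_mono) simp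
      then show ?thesis using xiR by (simp add: abs_mult)
    qed
    also have "\<dots> \<le> of_int PB" unfolding PB_def by simp
    finally have "\<bar>p\<bar> \<le> PB" by linarith
    moreover have "\<bar>q\<bar> \<le> QB" using qle unfolding QB_def by linarith
    ultimately have "(q,p) \<in> {-QB..QB} \<times> {-PB..PB}" by (simp add: abs_le_iff)
    then have "y \<in> G" unfolding G_def y by (rule rev_image_eqI) simp
    then show False using yG by simp
  qed
  define \<xi>' where "\<xi>' = real_of_int p - real_of_int q * alpc a b D"
  have xi'e: "\<xi>' = \<xi> + 2 * rb * r * of_int q" unfolding \<xi>'_def \<xi>_def alp alpc by (simp add: algebra_simps)
  define V where "V = Vr a b D p q"
  have V: "V = \<xi>^2 + 2 * rb * r * (of_int q * \<xi>)"
    unfolding V_def Vr_def \<xi>_def[symmetric] \<alpha>_def[symmetric] \<xi>'_def[symmetric] xi'e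
    by (simp add: algebra_simps power2_eq_square)
  have VB: "\<bar>V\<bar> \<le> B"
  proof -
    have "\<bar>V\<bar> \<le> \<bar>\<xi>^2\<bar> + \<bar>2 * rb * r * (of_int q * \<xi>)\<bar>" unfolding V by (rule abs_triangle_ineq)
    also have "\<dots> = \<xi>^2 + 2 * \<bar>rb\<bar> * r * (\<bar>real_of_int q\<bar> * \<bar>\<xi>\<bar>)" using r0 by (simp add: abs_mult)
    also have "\<dots> \<le> R^2 + 2 * \<bar>rb\<bar> * r * R"
    proof (rule add_mono)
      show "\<xi>^2 \<le> R^2" using xiR by (metis abs_ge_zero less_imp_le power2_abs power_mono)
      show "2 * \<bar>rb\<bar> * r * (\<bar>real_of_int q\<bar> * \<bar>\<xi>\<bar>) \<le> 2 * \<bar>rb\<bar> * r * R"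
        using qxi r0 by (intro mult_left_mono) auto
    qed
    finally show ?thesis unfolding B_def .
  qed
  define \<sigma> :: real where "\<sigma> = (if q > 0 then 1 else -1)"
  have \<sigma>q: "\<sigma> * of_int q = \<bar>real_of_int q\<bar>" unfolding \<sigma>_def by simp
  have \<sigma>2: "\<sigma> * \<sigma> = 1" unfolding \<sigma>_def by simp
  define c where "c = \<sigma> * (- V) / (2 * rb * r)"
  have \<sigma>s: "\<sigma> \<in> {1,-1}" unfolding \<sigma>_def by simp
  have pq0: "(p,q) \<noteq> (0::int,0::int)" using q0 by simp
  have VB': "\<bar>Vr a b D p q\<bar> \<le> B" using VB unfolding V_def .
  have cC: "c \<in> C" unfolding C_def c_def V_def using \<sigma>s pq0 VB' by blast
  have "c * (2 * rb * r) = - \<sigma> * V" unfolding c_def using den by simp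
  also have "\<dots> = - \<sigma> * \<xi>^2 - 2 * rb * r * ((\<sigma> * of_int q) * \<xi>)" unfolding V by (simp add: algebra_simps)
  also have "\<dots> = - \<sigma> * \<xi>^2 + 2 * rb * r * y" unfolding \<sigma>q y\<xi> by simp
  finally have "(y - c) * (2 * rb * r) = \<sigma> * \<xi>^2" by (simp add: algebra_simps)
  then have yc: "y - c = \<sigma> * \<xi>^2 / (2 * rb * r)" using den by (simp add: field_simps)
  have ayc: "\<bar>y - c\<bar> = \<xi>^2 / (2 * \<bar>rb\<bar> * r)" unfolding yc using r0
    by (simp add: abs_mult abs_divide \<sigma>_def)
  have "\<xi>^2 * \<bar>real_of_int q\<bar> < R^2"
  proof -
    have "\<bar>real_of_int q\<bar> * 1 \<le> \<bar>real_of_int q\<bar> * \<bar>real_of_int q\<bar>" using q1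
      by (intro mult_left_mono) auto
    then have qq: "\<bar>real_of_int q\<bar> \<le> \<bar>real_of_int q\<bar>^2" by (simp only: power2_eq_square mult_1_right)
    have "\<xi>^2 * \<bar>real_of_int q\<bar> \<le> \<xi>^2 * \<bar>real_of_int q\<bar>^2"
      by (rule mult_left_mono[OF qq]) simp
    also have "\<dots> = (\<bar>real_of_int q\<bar> * \<bar>\<xi>\<bar>)^2" by (simp add: power2_eq_square algebra_simps)
    also have "\<dots> < R^2" using qxi by (simp add: power_strict_mono)
    finally show ?thesis .
  qed
  then have "\<xi>^2 < R^2 / \<bar>real_of_int q\<bar>" using q1 by (simp add: pos_less_divide_eq)
  then have "\<xi>^2 / (2 * \<bar>rb\<bar> * r) < H / \<bar>real_of_int q\<bar>" unfolding H_def using rb0 r0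
    by (simp add: divide_strict_right_mono field_simps)
  also have "\<dots> \<le> H / real Q0" using qbig Q0pos H0 by (simp add: frac_le)
  finally have "\<bar>y - c\<bar> < \<delta> / 2" unfolding ayc using HQ by linarith
  then have "dist x c < \<delta>" using dyx unfolding dist_real_def by linarith
  moreover have "c \<noteq> x" using cC xC by blast
  moreover have "\<delta> \<le> dist x c" using \<delta> cC \<open>c \<noteq> x\<close> by blast
  ultimately show False by linarith
qed

end

theorem theorem4:
  fixes a b :: rat and D :: int
  assumes "b \<noteq> 0" and "D \<ge> 2" and "squarefree D"
  shows "A1 (of_rat a + of_rat b * sqrt (of_int D)) =
    {\<sigma> * 2 * of_rat b * sqrt (of_int D) * of_rat (qf_norm D s) | \<sigma> s.
       \<sigma> \<in> {1, -1} \<and> s \<in> dual_lattice D a b \<and> s \<noteq> (0, 0)}"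
proof -
  have "A1 (of_rat a + of_rat b * sqrt (of_int D)) = {x. x islimpt Sset (alp a b D)}"
    unfolding A1_def Sset_def alp_def ..
  also have "\<dots> = Tset a b D"
  proof (intro equalityI subsetI)
    fix x assume "x \<in> {x. x islimpt Sset (alp a b D)}"
    then show "x \<in> Tset a b D" using A1_sub[OF assms] by blast
  next
    fix x assume "x \<in> Tset a b D"
    then obtain \<sigma> p q where x: "x = \<sigma> * (- Vr a b D p q) / (2 * of_rat b * sqrt (of_int D))"
      and \<sigma>: "\<sigma> \<in> {1,-1}" and pq: "(p,q) \<noteq> (0::int,0::int)" unfolding Tset_def by blast
    have h: "(- Vr a b D p q / (2 * of_rat b * sqrt (of_int D))) islimpt Sset (alp a b D) \<and>
      (- (- Vr a b D p q / (2 * of_rat b * sqrt (of_int D)))) islimpt Sset (alp a b D)"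
      by (rule A1_sup[OF assms pq])
    from \<sigma> have "x = - Vr a b D p q / (2 * of_rat b * sqrt (of_int D)) \<or>
        x = - (- Vr a b D p q / (2 * of_rat b * sqrt (of_int D)))" unfolding x by auto
    then show "x \<in> {x. x islimpt Sset (alp a b D)}" using h by auto
  qed
  also have "\<dots> = {\<sigma> * 2 * of_rat b * sqrt (of_int D) * of_rat (qf_norm D s) | \<sigma> s.
       \<sigma> \<in> {1, -1} \<and> s \<in> dual_lattice D a b \<and> s \<noteq> (0, 0)}"
    by (rule rhs_eq[OF assms, symmetric])
  finally show ?thesis .
qed

end
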